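(* For any composition $\alpha$ of a positive integer $n$, \[\sum_{j=0}^{\lfloor n/2\rfloor}(-1)^{\ell_+^{2j}(\alpha)+r_-^{2j}(\alpha)}\,C\bigl(\ell_+^{2j}(\alpha),\,j-\ell_+^{2j}(\alpha)\bigr)\,C\bigl(r_-^{2j}(\alpha),\,\lfloor n/2\rfloor-j-r_-^{2j}(\alpha)\bigr)=\begin{cases}4^{\lfloor n/2\rfloor}&\text{if }\alpha=(n),\\0&\text{otherwise,}\end{cases}\] and \[\sum_{i=0}^n\frac{(-1)^{\ell_-^i(\alpha)+r_-^i(\alpha)+i}}{4^{\lfloor i/2\rfloor+\lfloor (n-i)/2\rfloor}}\,C\bigl(\ell_-^i(\alpha),\,\lfloor i/2\rfloor-\ell_-^i(\alpha)\bigr)\,C\bigl(r_-^i(\alpha),\,\lfloor (n-i)/2\rfloor-r_-^i(\alpha)\bigr)=0.\]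
   Context: A composition $\alpha=(a_1,\ldots,a_k)$ of $n$ is a sequence of positive integers with sum $n$; it corresponds bijectively to its descent set $D(\alpha)=\{a_1,a_1+a_2,\ldots,a_1+\cdots+a_{k-1}\}\subseteq\{1,\ldots,n-1\}$. For $0\le i\le n$, let $L_i(\alpha)$ be the composition of $i$ with descent set $D(\alpha)\cap\{1,\ldots,i-1\}$ and $R_i(\alpha)$ the composition of $n-i$ with descent set $\{d-i: d\in D(\alpha),\ d>i\}$ (so $L_0(\alpha)=R_n(\alpha)=()$, the empty composition); these are the two pieces obtained by cutting the ribbon diagram of $\alpha$ after its first $i$ cells. Statistics: $p_-(\beta)=\#\{i\ne k: b_i>1\}$ for $\beta=(b_1,\ldots,b_k)$; $p_+(\beta)=1+\#\{i\ne1,k: b_i>1\}$ if $k>1$ and $p_+(\beta)=0$ if $k\le1$. Set $\ell_\pm^i(\alpha)=p_\pm(L_i(\alpha))$ and $r_\pm^i(\alpha)=p_\pm(R_i(\alpha))$. $C(p,q)=\frac{(2p)!(2q)!}{p!(p+q)!q!}$. *)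

theory Defs
  imports Complex_Main
begin

definition is_comp :: "nat \<Rightarrow> nat list \<Rightarrow> bool" where
  "is_comp n \<alpha> \<longleftrightarrow> (\<forall>a\<in>set \<alpha>. 0 < a) \<and> sum_list \<alpha> = n"

definition descents :: "nat list \<Rightarrow> nat set" where
  "descents \<alpha> = {sum_list (take j \<alpha>) | j. 1 \<le> j \<and> j < length \<alpha>}"

definition comp_of_set :: "nat \<Rightarrow> nat set \<Rightarrow> nat list" where
  "comp_of_set n S =
     (if n = 0 then []
      else (let pts = 0 # sorted_list_of_set S @ [n]
            in map (\<lambda>(a, b). b - a) (zip pts (tl pts))))"

definition Lcomp :: "nat list \<Rightarrow> nat \<Rightarrow> nat list" where
  "Lcomp \<alpha> i = comp_of_set i (descents \<alpha> \<inter> {1..<i})"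

definition Rcomp :: "nat list \<Rightarrow> nat \<Rightarrow> nat list" where
  "Rcomp \<alpha> i = comp_of_set (sum_list \<alpha> - i) {d - i | d. d \<in> descents \<alpha> \<and> i < d}"

definition p_minus :: "nat list \<Rightarrow> nat" where
  "p_minus \<beta> = card {i. i < length \<beta> - 1 \<and> 1 < \<beta> ! i}"

definition p_plus :: "nat list \<Rightarrow> nat" where
  "p_plus \<beta> = (if 1 < length \<beta>
                 then 1 + card {i. 0 < i \<and> i < length \<beta> - 1 \<and> 1 < \<beta> ! i}
                 else 0)"

definition lp :: "nat list \<Rightarrow> nat \<Rightarrow> nat" where "lp \<alpha> i = p_plus (Lcomp \<alpha> i)"
definition lm :: "nat list \<Rightarrow> nat \<Rightarrow> nat" where "lm \<alpha> i = p_minus (Lcomp \<alpha> i)"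
definition rp :: "nat list \<Rightarrow> nat \<Rightarrow> nat" where "rp \<alpha> i = p_plus (Rcomp \<alpha> i)"
definition rm :: "nat list \<Rightarrow> nat \<Rightarrow> nat" where "rm \<alpha> i = p_minus (Rcomp \<alpha> i)"

definition Cnum :: "nat \<Rightarrow> nat \<Rightarrow> real" where
  "Cnum p q = fact (2*p) * fact (2*q) / (fact p * fact (p+q) * fact q)"

end

theory Submission
  imports Defs "HOL-Computational_Algebra.Formal_Power_Series"
begin


definition cc :: "nat \<Rightarrow> nat \<Rightarrow> real" where
  "cc p h = (-1)^p * Cnum p (h - p) / 4^h"

lemma Cnum_rec: "4 * Cnum p q = Cnum (Suc p) q + Cnum p (Suc q)"
proof -
  have a: "fact (2 * Suc p) = (2*p+2) * (2*p+1) * (fact (2*p) :: real)"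
    by (simp add: fact_Suc algebra_simps)
  have b: "fact (2 * Suc q) = (2*q+2) * (2*q+1) * (fact (2*q) :: real)"
    by (simp add: fact_Suc algebra_simps)
  have c: "fact (Suc p + q) = (p+q+1) * (fact (p+q) :: real)"
    by (simp add: fact_Suc algebra_simps)
  have d: "fact (p + Suc q) = (p+q+1) * (fact (p+q) :: real)"
    by (simp add: fact_Suc algebra_simps)
  have e: "fact (Suc p) = (p+1) * (fact p :: real)" "fact (Suc q) = (q+1) * (fact q :: real)"
    by (simp_all add: fact_Suc algebra_simps)
  have pos: "fact p > (0::real)" "fact q > (0::real)" "fact (p+q) > (0::real)" by auto
  define K where "K = fact (2*p) * fact (2*q) / (fact p * fact (p+q) * fact q :: real)"
  have k0: "Cnum p q = K" unfolding Cnum_def K_def by simp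
  have k1: "Cnum (Suc p) q = 2*(2*p+1) / (p+q+1) * K" unfolding Cnum_def K_def a c e using pos
    by (simp add: divide_simps) (simp add: algebra_simps)
  have k2: "Cnum p (Suc q) = 2*(2*q+1) / (p+q+1) * K" unfolding Cnum_def K_def b d e using pos
    by (simp add: divide_simps) (simp add: algebra_simps)
  have nz: "real p + real q + 1 \<noteq> 0" by linarith
  have "2*(2*p+1) / (p+q+1) + 2*(2*q+1) / (p+q+1) = (2*(2*real p+1) + 2*(2*real q+1)) / (real p+real q+1)"
    by (simp add: add_divide_distrib[symmetric] add_ac)
  also have "\<dots> = 4" using nz by (simp add: divide_simps)
  finally have "2*(2*p+1) / (p+q+1) + 2*(2*q+1) / (p+q+1) = (4::real)" .
  moreover have "Cnum (Suc p) q + Cnum p (Suc q) = (2*(2*p+1) / (p+q+1) + 2*(2*q+1) / (p+q+1)) * K"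
    unfolding k1 k2 by (simp only: distrib_right)
  ultimately show ?thesis unfolding k0 by simp
qed

lemma cc_rec:
  assumes "Suc p \<le> m"
  shows "cc (Suc p) m = cc p m - cc p (m - 1)"
proof -
  define q where "q = m - Suc p"
  have m: "m = Suc (p + q)" using assms unfolding q_def by simp
  have "Cnum (Suc p) q = 4 * Cnum p q - Cnum p (Suc q)" using Cnum_rec[of p q] by simp
  moreover have "m - Suc p = q" "m - p = Suc q" "m - 1 - p = q" using m by auto
  moreover have H: "Cnum p (Suc q) * s + Cnum (Suc p) q * s = Cnum p q * (4 * s)" for s :: real
  proof -
    have "(Cnum p (Suc q) + Cnum (Suc p) q) * s = (4 * Cnum p q) * s" using Cnum_rec[of p q] by simp
    then show ?thesis by (simp add: algebra_simps)
  qed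
  ultimately show ?thesis unfolding cc_def using m H[of "(-1)^p"] by (simp add: field_simps)
qed

lemma gchoose_half:
  "((-1/2::real) gchoose k) = (-1/4)^k * (fact (2*k) / (fact k * fact k))"
proof (induction k)
  case 0
  then show ?case by simp
next
  case (Suc k)
  have r: "((-1/2::real) gchoose Suc k) * fact (Suc k) = ((-1/2::real) gchoose k) * fact k * (-1/2 - real k)"
    unfolding gbinomial_mult_fact' by simp
  have f1: "fact (2 * Suc k) = (2*real k+2) * (2*real k+1) * (fact (2*k) :: real)"
    by (simp add: fact_Suc algebra_simps)
  have f2: "fact (Suc k) = (real k+1) * (fact k :: real)"
    by (simp add: fact_Suc algebra_simps)
  have pos: "fact k > (0::real)" by simp
  have "((-1/2::real) gchoose Suc k) = ((-1/2::real) gchoose k) * fact k * (-1/2 - real k) / fact (Suc k)"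
    using r by (simp add: eq_divide_eq del: fact_Suc)
  also have "\<dots> = (-1/4)^(Suc k) * (fact (2*Suc k) / (fact (Suc k) * fact (Suc k)))"
    unfolding Suc.IH f1 f2 using pos by (simp add: divide_simps) (simp add: algebra_simps)
  finally show ?case .
qed

lemma central_conv: "(\<Sum>j=0..h. cc 0 j * cc 0 (h - j)) = 1"
proof -
  have "cc 0 j = (-1)^j * ((-1/2::real) gchoose j)" for j
    unfolding cc_def Cnum_def gchoose_half by (simp add: power_divide field_simps flip: power_mult_distrib)
  then have "(\<Sum>j=0..h. cc 0 j * cc 0 (h - j)) = (\<Sum>j=0..h. (-1)^h * (((-1/2::real) gchoose j) * ((-1/2::real) gchoose (h-j))))"
    by (intro sum.cong) (auto simp: algebra_simps simp flip: power_add)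
  also have "\<dots> = (-1)^h * ((-1::real) gchoose h)"
    by (simp add: sum_distrib_left[symmetric] gbinomial_Vandermonde)
  also have "\<dots> = 1"
    using gbinomial_minus[of "1::real" h] by (simp add: binomial_gbinomial[symmetric] flip: power_add)
  finally show ?thesis .
qed

definition TB :: "nat set \<Rightarrow> nat \<Rightarrow> nat \<Rightarrow> real" where
  "TB B h j = cc (card {y\<in>B. y<j}) j * cc (card {y\<in>B. j<y}) (h-j)"

definition SB :: "nat set \<Rightarrow> nat \<Rightarrow> real" where
  "SB B h = (\<Sum>j=0..h. TB B h j)"

lemma card_lt_le: "card {y\<in>B. y<(j::nat)} \<le> j"
proof -
  have "card {y\<in>B. y<j} \<le> card {..<j}" by (rule card_mono) auto
  then show ?thesis by simp
qed

lemma card_gt_le: "B \<subseteq> {0..h} \<Longrightarrow> card {y\<in>B. (j::nat)<y} \<le> h - j"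
proof -
  assume "B \<subseteq> {0..h}"
  then have "card {y\<in>B. j<y} \<le> card {j<..h}" by (intro card_mono) auto
  then show ?thesis by simp
qed

lemma card_remove_lt:
  assumes "finite B" "x \<in> B" "x < j"
  shows "card {y\<in>B. y<j} = Suc (card {y\<in>B - {x}. y<j})"
proof -
  have "{y\<in>B. y<j} = insert x {y\<in>B - {x}. y<j}" using assms by auto
  then show ?thesis using assms by simp
qed

lemma card_remove_gt:
  assumes "finite B" "x \<in> B" "j < x"
  shows "card {y\<in>B. j<y} = Suc (card {y\<in>B - {x}. j<y})"
proof -
  have "{y\<in>B. j<y} = insert x {y\<in>B - {x}. j<y}" using assms by auto
  then show ?thesis using assms by simp
qed

lemma card_remove_no:
  assumes "\<not> P x"
  shows "card {y\<in>B. P y} = card {y\<in>B - {x}. P y}"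
proof -
  have "{y\<in>B. P y} = {y\<in>B - {x}. P y}" using assms by auto
  then show ?thesis by simp
qed

lemma card_img_filter:
  assumes "inj_on g A"
  shows "card {z\<in>g ` A. P z} = card {y\<in>A. P (g y)}"
proof -
  have "{z\<in>g ` A. P z} = g ` {y\<in>A. P (g y)}" by auto
  moreover have "inj_on g {y\<in>A. P (g y)}" using assms by (rule inj_on_subset) auto
  ultimately show ?thesis by (simp add: card_image)
qed

lemma SB_rec:
  assumes B: "finite B" "B \<subseteq> {0..h}" and x: "x \<in> B" and h: "0 < h"
  shows "SB B h = SB (B - {x}) h - SB ((\<lambda>y. if y < x then y else y - 1) ` (B - {x})) (h - 1)"
proof -
  define B' where "B' = B - {x}"
  define g where "g = (\<lambda>y::nat. if y < x then y else y - 1)"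
  define B'' where "B'' = g ` B'"
  have inj: "inj_on g B'" unfolding inj_on_def g_def B'_def by auto
  have xh: "x \<le> h" using B x by auto
  define E where "E j = (if j < x then TB B'' (h-1) j else if j = x then 0 else TB B'' (h-1) (j-1))" for j
  have key: "TB B h j = TB B' h j - E j" if j: "j \<le> h" for j
  proof (cases "j < x")
    case True
    have a: "card {y\<in>B. y<j} = card {y\<in>B'. y<j}" unfolding B'_def
      by (rule card_remove_no) (use True in auto)
    have b: "card {y\<in>B. j<y} = Suc (card {y\<in>B'. j<y})" unfolding B'_def
      by (rule card_remove_gt) (use B x True in auto)
    have a2: "card {z\<in>B''. z<j} = card {y\<in>B'. y<j}" unfolding B''_def card_img_filter[OF inj]
      by (rule arg_cong[where f=card]) (use True in \<open>auto simp: g_def B'_def\<close>)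
    have b2: "card {z\<in>B''. j<z} = card {y\<in>B'. j<y}" unfolding B''_def card_img_filter[OF inj]
      by (rule arg_cong[where f=card]) (use True in \<open>auto simp: g_def B'_def\<close>)
    have bd: "Suc (card {y\<in>B'. j<y}) \<le> h - j" using card_gt_le[OF B(2), of j] b by simp
    show ?thesis unfolding TB_def a b E_def a2 b2 using True
      by (simp add: cc_rec[OF bd] algebra_simps)
  next
    case False
    show ?thesis
    proof (cases "j = x")
      case True
      have a: "card {y\<in>B. y<j} = card {y\<in>B'. y<j}" unfolding B'_def
        by (rule card_remove_no) (use True in auto)
      have b: "card {y\<in>B. j<y} = card {y\<in>B'. j<y}" unfolding B'_def
        by (rule card_remove_no) (use True in auto)
      show ?thesis unfolding TB_def a b E_def using True by simp
    next
      case False2: False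
      with False have xj: "x < j" by simp
      have a: "card {y\<in>B. y<j} = Suc (card {y\<in>B'. y<j})" unfolding B'_def
        by (rule card_remove_lt) (use B x xj in auto)
      have b: "card {y\<in>B. j<y} = card {y\<in>B'. j<y}" unfolding B'_def
        by (rule card_remove_no) (use xj in auto)
      have a2: "card {z\<in>B''. z<j-1} = card {y\<in>B'. y<j}" unfolding B''_def card_img_filter[OF inj]
        by (rule arg_cong[where f=card]) (use xj in \<open>auto simp: g_def B'_def\<close>)
      have b2: "card {z\<in>B''. j-1<z} = card {y\<in>B'. j<y}" unfolding B''_def card_img_filter[OF inj]
        by (rule arg_cong[where f=card]) (use xj in \<open>auto simp: g_def B'_def\<close>)
      have bd: "Suc (card {y\<in>B'. y<j}) \<le> j" using card_lt_le[of B j] a by simp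
      have hj: "h - 1 - (j - 1) = h - j" using xj by simp
      show ?thesis unfolding TB_def a b E_def a2 b2 hj using xj
        by (simp add: cc_rec[OF bd] algebra_simps)
    qed
  qed
  have sumE: "(\<Sum>j=0..h. E j) = SB B'' (h-1)"
  proof -
    have "(\<Sum>j=0..h. E j) = (\<Sum>j\<in>{0..h}-{x}. E j) + E x"
      using xh by (simp add: sum.remove[of "{0..h}" x] add.commute)
    also have "E x = 0" unfolding E_def by simp
    also have "(\<Sum>j\<in>{0..h}-{x}. E j) = (\<Sum>k=0..h-1. TB B'' (h-1) k)"
      by (rule sum.reindex_bij_witness[where j="\<lambda>j. if j < x then j else j - 1"
                                         and i="\<lambda>k. if k < x then k else Suc k"])
         (use h xh in \<open>auto simp: E_def split: if_splits\<close>)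
    finally show ?thesis unfolding SB_def by simp
  qed
  have "SB B h = (\<Sum>j=0..h. TB B' h j - E j)" unfolding SB_def by (rule sum.cong) (auto simp: key)
  also have "\<dots> = SB B' h - SB B'' (h-1)" unfolding sum_subtractf SB_def[of B'] sumE ..
  finally show ?thesis unfolding B''_def g_def B'_def .
qed

lemma SB_main:
  "finite B \<Longrightarrow> B \<subseteq> {0..h} \<Longrightarrow> B \<noteq> {0..h} \<Longrightarrow> SB B h = (if B = {} then 1 else 0)"
proof (induction "card B" arbitrary: B h rule: less_induct)
  case less
  show ?case
  proof (cases "B = {}")
    case True
    then show ?thesis using central_conv[of h] unfolding SB_def TB_def by simp
  next
    case False
    then obtain x where x: "x \<in> B" by auto
    have h: "0 < h"
    proof (rule ccontr)
      assume "\<not> 0 < h"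
      then have "h = 0" by simp
      then have "B = {0..h}" using less.prems x by auto
      then show False using less.prems by simp
    qed
    define B' where "B' = B - {x}"
    define g where "g = (\<lambda>y::nat. if y < x then y else y - 1)"
    define B'' where "B'' = g ` B'"
    have inj: "inj_on g B'" unfolding inj_on_def g_def B'_def by auto
    have fB': "finite B'" "finite B''" using less.prems unfolding B'_def B''_def by auto
    have cB': "card B' < card B" unfolding B'_def using less.prems x by (meson card_Diff1_less)
    have cB'': "card B'' = card B'" unfolding B''_def using inj by (simp add: card_image)
    have sB': "B' \<subseteq> {0..h}" "B' \<noteq> {0..h}" using less.prems x unfolding B'_def by auto
    have sB'': "B'' \<subseteq> {0..h-1}" using less.prems x unfolding B''_def B'_def g_def by auto
    have nB'': "B'' \<noteq> {0..h-1}"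
    proof
      assume "B'' = {0..h-1}"
      then have "card B' = h" using cB'' h by simp
      moreover have "card B' = card B - 1" unfolding B'_def using x less.prems(1) by simp
      moreover have "card B \<noteq> 0" using x less.prems(1) by auto
      ultimately have "card B = Suc h" by linarith
      then have "card B = card {0..h}" by simp
      then have "B = {0..h}" using less.prems by (intro card_subset_eq) auto
      then show False using less.prems by simp
    qed
    have IH1: "SB B' h = (if B' = {} then 1 else 0)" using less.hyps[OF cB' fB'(1) sB'] .
    have cB2: "card B'' < card B" using cB' cB'' by linarith
    have IH2: "SB B'' (h-1) = (if B'' = {} then 1 else 0)" by (rule less.hyps[OF cB2 fB'(2) sB'' nB''])
    have "SB B h = SB B' h - SB B'' (h-1)"
      unfolding B''_def g_def B'_def by (rule SB_rec[OF less.prems(1,2) x h])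
    moreover have "B'' = {} \<longleftrightarrow> B' = {}" unfolding B''_def by simp
    ultimately show ?thesis using IH1 IH2 False by simp
  qed
qed



lemma comp_of_set_facts:
  assumes S: "S \<subseteq> {1..<m}"
  shows "p_minus (comp_of_set m S) = card {d\<in>S. 2 \<le> d \<and> d - 1 \<notin> S}"
    and "p_plus (comp_of_set m S) = card {d\<in>S. d - 1 \<notin> S}"
proof -
  have fin: "finite S" using S finite_subset by blast
  show "p_minus (comp_of_set m S) = card {d\<in>S. 2 \<le> d \<and> d - 1 \<notin> S}"
   and "p_plus (comp_of_set m S) = card {d\<in>S. d - 1 \<notin> S}"
  proof (atomize(full), cases "m = 0")
    case True
    then have "S = {}" using S by auto
    then show "p_minus (comp_of_set m S) = card {d\<in>S. 2 \<le> d \<and> d - 1 \<notin> S} \<and>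
      p_plus (comp_of_set m S) = card {d\<in>S. d - 1 \<notin> S}"
      using True by (simp add: comp_of_set_def p_minus_def p_plus_def)
  next
    case False
    define xs where "xs = sorted_list_of_set S"
    define k where "k = length xs"
    have sx: "sorted_wrt (<) xs" unfolding xs_def by simp
    have dx: "distinct xs" unfolding xs_def by simp
    have setx: "set xs = S" unfolding xs_def using fin by simp
    have kS: "k = card S" unfolding k_def xs_def by simp
    define \<beta> where "\<beta> = comp_of_set m S"
    have \<beta>: "\<beta> = map (\<lambda>(a, b). b - a) (zip (0 # xs @ [m]) (xs @ [m]))"
      unfolding \<beta>_def comp_of_set_def xs_def using False by (simp add: Let_def)
    have len: "length \<beta> = Suc k" unfolding \<beta> k_def by simp
    have lt: "xs ! u < xs ! v" if "u < v" "v < k" for u v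
      using sx that unfolding k_def by (simp add: sorted_wrt_iff_nth_less)
    have pos: "1 \<le> xs ! u" if "u < k" for u
      using S setx that unfolding k_def by (auto dest!: nth_mem)
    have nth\<beta>: "\<beta> ! u = xs ! u - (if u = 0 then 0 else xs ! (u - 1))" if "u < k" for u
      using that unfolding \<beta> k_def
      by (cases u) (auto simp: nth_append)
    have le: "xs ! u \<le> xs ! v" if "u \<le> v" "v < k" for u v
    proof (cases "u = v")
      case True then show ?thesis by simp
    next
      case False then show ?thesis using lt[of u v] that by simp
    qed
    have memS: "d \<in> S \<longleftrightarrow> (\<exists>v<k. xs ! v = d)" for d
      unfolding setx[symmetric] k_def by (auto simp: in_set_conv_nth)
    have c1: "1 < \<beta> ! u \<longleftrightarrow> xs ! u - 1 \<notin> S" if u: "0 < u" "u < k" for u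
    proof -
      have b: "\<beta> ! u = xs ! u - xs ! (u - 1)" using nth\<beta>[OF u(2)] u by simp
      have l: "xs ! (u - 1) < xs ! u" using lt[of "u-1" u] u by simp
      have "xs ! u - 1 \<in> S \<longleftrightarrow> xs ! u - 1 = xs ! (u - 1)"
      proof
        assume "xs ! u - 1 \<in> S"
        then obtain v where v: "v < k" "xs ! v = xs ! u - 1" using memS by auto
        have "v < u"
        proof (rule ccontr)
          assume "\<not> v < u"
          then have "xs ! u \<le> xs ! v" using le[of u v] v(1) by simp
          then show False using v(2) l by linarith
        qed
        then have "xs ! v \<le> xs ! (u - 1)" using le[of v "u-1"] u by simp
        then show "xs ! u - 1 = xs ! (u - 1)" using v(2) l by linarith
      next
        assume "xs ! u - 1 = xs ! (u - 1)"
        moreover have "u - 1 < k" using u by simp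
        ultimately show "xs ! u - 1 \<in> S" using memS by metis
      qed
      then show ?thesis using b l by auto
    qed
    have c0: "xs ! 0 - 1 \<notin> S" if "0 < k"
    proof
      assume "xs ! 0 - 1 \<in> S"
      then obtain v where v: "v < k" "xs ! v = xs ! 0 - 1" using memS by auto
      have "xs ! 0 \<le> xs ! v" using le[of 0 v] v by simp
      then show False using v(2) pos[OF that] by linarith
    qed
    have c2: "1 < \<beta> ! u \<longleftrightarrow> 2 \<le> xs ! u \<and> xs ! u - 1 \<notin> S" if u: "u < k" for u
    proof (cases "u = 0")
      case True
      then show ?thesis using nth\<beta>[OF u] c0 u by auto
    next
      case False
      have "xs ! (u - 1) < xs ! u" using lt[of "u-1" u] u False by simp
      moreover have "1 \<le> xs ! (u-1)" using pos[of "u-1"] u by simp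
      ultimately show ?thesis using c1[of u] u False by simp
    qed
    have injx: "inj_on ((!) xs) {..<k}" using dx unfolding k_def by (simp add: inj_on_def nth_eq_iff_index_eq)
    have img: "card {d\<in>S. R d} = card {u. u < k \<and> R (xs ! u)}" for R
    proof -
      have "{d\<in>S. R d} = (!) xs ` {u. u < k \<and> R (xs ! u)}" using memS by auto
      moreover have "inj_on ((!) xs) {u. u < k \<and> R (xs ! u)}" by (rule inj_on_subset[OF injx]) auto
      ultimately show ?thesis by (simp add: card_image)
    qed
    have pm: "p_minus \<beta> = card {d\<in>S. 2 \<le> d \<and> d - 1 \<notin> S}"
      unfolding p_minus_def img len
      by (rule arg_cong[where f=card]) (auto simp: c2[simplified])
    have pp: "p_plus \<beta> = card {d\<in>S. d - 1 \<notin> S}"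
    proof (cases "k = 0")
      case True
      then have "S = {}" using kS fin by simp
      then show ?thesis unfolding p_plus_def using len True by simp
    next
      case False
      have "{u. u < k \<and> xs ! u - 1 \<notin> S} = insert 0 {u. 0 < u \<and> u < k \<and> 1 < \<beta> ! u}"
        using c0 c1 False by auto
      then have "card {d\<in>S. d - 1 \<notin> S} = Suc (card {u. 0 < u \<and> u < k \<and> 1 < \<beta> ! u})"
        unfolding img by simp
      then show ?thesis unfolding p_plus_def using len False by simp
    qed
    show "p_minus (comp_of_set m S) = card {d\<in>S. 2 \<le> d \<and> d - 1 \<notin> S} \<and>
      p_plus (comp_of_set m S) = card {d\<in>S. d - 1 \<notin> S}"
      using pm pp unfolding \<beta>_def by simp
  qed
qed

lemma descents_sub:
  assumes "is_comp n \<alpha>"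
  shows "descents \<alpha> \<subseteq> {1..<n}"
proof
  fix d assume "d \<in> descents \<alpha>"
  then obtain j where j: "d = sum_list (take j \<alpha>)" "1 \<le> j" "j < length \<alpha>"
    unfolding descents_def by auto
  have p: "\<forall>a\<in>set \<alpha>. 0 < a" "sum_list \<alpha> = n" using assms unfolding is_comp_def by auto
  have "\<alpha> ! 0 \<in> set (take j \<alpha>)" using j by (simp add: in_set_conv_nth) (rule exI[of _ 0], auto)
  then have "\<alpha> ! 0 \<le> d" using j(1) by (simp add: member_le_sum_list)
  moreover have "\<alpha> ! 0 \<in> set \<alpha>" using j(2,3) by (intro nth_mem) linarith
  then have "0 < \<alpha> ! 0" using p(1) by blast
  moreover have "\<alpha> ! j \<in> set (drop j \<alpha>)" using j by (simp add: in_set_conv_nth) (rule exI[of _ 0], auto)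
  then have "\<alpha> ! j \<le> sum_list (drop j \<alpha>)" by (simp add: member_le_sum_list)
  moreover have "0 < \<alpha> ! j" using p j by auto
  moreover have "sum_list (take j \<alpha>) + sum_list (drop j \<alpha>) = n"
    using p by (simp flip: sum_list_append)
  ultimately show "d \<in> {1..<n}" using j by auto
qed

definition PP :: "nat list \<Rightarrow> nat set" where
  "PP \<alpha> = {d\<in>descents \<alpha>. 2 \<le> d \<and> d - 1 \<notin> descents \<alpha>}"
definition QQ :: "nat list \<Rightarrow> nat set" where
  "QQ \<alpha> = {d\<in>descents \<alpha>. d - 1 \<notin> descents \<alpha>}"

lemma stats:
  assumes "is_comp n \<alpha>"
  shows "lm \<alpha> i = card {d\<in>PP \<alpha>. d < i}"
    and "lp \<alpha> i = card {d\<in>QQ \<alpha>. d < i}"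
    and "rm \<alpha> i = card {d\<in>PP \<alpha>. i + 2 \<le> d}"
proof -
  define D where "D = descents \<alpha>"
  have D: "D \<subseteq> {1..<n}" using descents_sub[OF assms] unfolding D_def .
  have sn: "sum_list \<alpha> = n" using assms unfolding is_comp_def by simp
  have SL: "D \<inter> {1..<i} \<subseteq> {1..<i}" by auto
  show "lm \<alpha> i = card {d\<in>PP \<alpha>. d < i}"
    unfolding lm_def Lcomp_def comp_of_set_facts(1)[OF SL, folded D_def] PP_def D_def[symmetric]
    by (rule arg_cong[where f=card]) (use D in auto)
  show "lp \<alpha> i = card {d\<in>QQ \<alpha>. d < i}"
    unfolding lp_def Lcomp_def comp_of_set_facts(2)[OF SL, folded D_def] QQ_def D_def[symmetric]
    by (rule arg_cong[where f=card]) (use D in auto)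
  define SR where "SR = {d - i | d. d \<in> D \<and> i < d}"
  have SR: "SR \<subseteq> {1..<n - i}" unfolding SR_def using D by fastforce
  have inj: "inj_on (\<lambda>d. d - i) {d\<in>PP \<alpha>. i + 2 \<le> d}" by (rule inj_onI) auto
  have "{e\<in>SR. 2 \<le> e \<and> e - 1 \<notin> SR} = (\<lambda>d. d - i) ` {d\<in>PP \<alpha>. i + 2 \<le> d}"
  proof (rule set_eqI, rule iffI)
    fix e assume "e \<in> {e\<in>SR. 2 \<le> e \<and> e - 1 \<notin> SR}"
    then obtain d where d: "e = d - i" "d \<in> D" "i < d" "2 \<le> e" "e - 1 \<notin> SR" unfolding SR_def by auto
    have "d - 1 \<notin> D"
    proof
      assume "d - 1 \<in> D"
      then have "d - 1 - i \<in> SR" unfolding SR_def using d by (intro CollectI exI[of _ "d - 1"]) auto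
      moreover have "d - 1 - i = e - 1" using d(1) by simp
      ultimately show False using d(5) by simp
    qed
    then show "e \<in> (\<lambda>d. d - i) ` {d\<in>PP \<alpha>. i + 2 \<le> d}" using d unfolding PP_def D_def[symmetric]
      by (intro image_eqI[of _ _ d]) auto
  next
    fix e assume "e \<in> (\<lambda>d. d - i) ` {d\<in>PP \<alpha>. i + 2 \<le> d}"
    then obtain d where d: "e = d - i" "d \<in> D" "i + 2 \<le> d" "d - 1 \<notin> D" unfolding PP_def D_def by auto
    have "e - 1 \<notin> SR"
    proof
      assume "e - 1 \<in> SR"
      then obtain d' where d': "e - 1 = d' - i" "d' \<in> D" "i < d'" unfolding SR_def by auto
      then have "d' = d - 1" using d by simp
      then show False using d d' by simp
    qed
    then show "e \<in> {e\<in>SR. 2 \<le> e \<and> e - 1 \<notin> SR}" using d unfolding SR_def by auto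
  qed
  then show "rm \<alpha> i = card {d\<in>PP \<alpha>. i + 2 \<le> d}"
    unfolding rm_def Rcomp_def sn D_def[symmetric] SR_def[symmetric] comp_of_set_facts(1)[OF SR]
    using inj by (simp add: card_image)
qed



lemma sum_parity: "(\<Sum>i=0..(n::nat). f i) = (\<Sum>m=0..n div 2. f (2*m)) + (\<Sum>m<(n+1) div 2. f (2*m+1))"
proof (induction n)
  case 0
  then show ?case by simp
next
  case (Suc n)
  show ?case
  proof (cases "even n")
    case True
    then obtain q where q: "n = 2*q" by auto
    have "(\<Sum>i=0..Suc n. f i) = (\<Sum>i=0..n. f i) + f (Suc n)" by simp
    also have "\<dots> = (\<Sum>m=0..q. f (2*m)) + (\<Sum>m<q. f (2*m+1)) + f (2*q+1)" using Suc q by simp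
    also have "\<dots> = (\<Sum>m=0..Suc n div 2. f (2*m)) + (\<Sum>m<(Suc n+1) div 2. f (2*m+1))"
      using q by (simp add: add.assoc)
    finally show ?thesis .
  next
    case False
    then obtain q where q: "n = 2*q+1" using oddE by blast
    have "(\<Sum>i=0..Suc n. f i) = (\<Sum>i=0..n. f i) + f (Suc n)" by simp
    also have "\<dots> = (\<Sum>m=0..q. f (2*m)) + (\<Sum>m<Suc q. f (2*m+1)) + f (2*(Suc q))" using Suc q by simp
    also have "\<dots> = (\<Sum>m=0..Suc n div 2. f (2*m)) + (\<Sum>m<(Suc n+1) div 2. f (2*m+1))"
      using q by (simp add: add_ac)
    finally show ?thesis .
  qed
qed

lemma chain:
  assumes na: "\<forall>d\<in>X. Suc d \<notin> X" and blk: "\<forall>m\<le>h. 2*m+c \<in> X \<or> 2*m+1+c \<in> X" and one: "1 + c \<in> X"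
  shows "2*h+1+c \<in> X"
  using blk
proof (induction h)
  case 0
  then show ?case using one by simp
next
  case (Suc h)
  then have "2*h+1+c \<in> X" by simp
  then have "Suc (2*h+1+c) \<notin> X" using na by blast
  then have "2*h+2+c \<notin> X" by simp
  then show ?case using Suc.prems[rule_format, of "Suc h"] by simp
qed

lemma div2_eq: "(a::nat) div 2 = b div 2 \<Longrightarrow> a \<noteq> b \<Longrightarrow> Suc a = b \<or> Suc b = a" by presburger
lemma div2_lt: "((a::nat) div 2 < j) = (a < 2*j)" by presburger
lemma div2_gt: "(j < (a::nat) div 2) = (2*j+2 \<le> a)" by presburger
lemma div2_le: "(a::nat) \<le> 2*h \<Longrightarrow> a div 2 \<le> h" by presburger
lemma div2_cases: "(a::nat) div 2 = m \<Longrightarrow> a = 2*m \<or> a = 2*m+1" by presburger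

lemma block_apply:
  assumes fin: "finite X" and na: "\<forall>d\<in>X. Suc d \<notin> X" and bd: "\<forall>d\<in>X. c < d \<and> d < 2*h+1+c"
  shows "(\<Sum>j=0..h. cc (card {d\<in>X. d < 2*j+c}) j * cc (card {d\<in>X. 2*j+2+c \<le> d}) (h-j))
         = (if X = {} then 1 else 0)"
proof -
  define g where "g = (\<lambda>d::nat. (d - c) div 2)"
  define B where "B = g ` X"
  have inj: "inj_on g X"
  proof (rule inj_onI)
    fix d d' assume d: "d \<in> X" "d' \<in> X" "g d = g d'"
    show "d = d'"
    proof (rule ccontr)
      assume "d \<noteq> d'"
      moreover have "c < d" "c < d'" using d bd by auto
      moreover have "(d - c) div 2 = (d' - c) div 2" using d(3) unfolding g_def .
      ultimately have "Suc (d - c) = d' - c \<or> Suc (d' - c) = d - c" using div2_eq[of "d - c" "d' - c"] by simp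
      then have "Suc d = d' \<or> Suc d' = d" using \<open>c < d\<close> \<open>c < d'\<close> by linarith
      then show False using d na by auto
    qed
  qed
  have g1: "g d < j \<longleftrightarrow> d < 2*j+c" if "c < d" for d j unfolding g_def div2_lt using that by linarith
  have g2: "j < g d \<longleftrightarrow> 2*j+2+c \<le> d" if "c < d" for d j unfolding g_def div2_gt using that by linarith
  have g3: "g d \<le> h" if "d < 2*h+1+c" for d unfolding g_def using that by (intro div2_le) linarith
  have e1: "card {d\<in>X. d < 2*j+c} = card {z\<in>B. z < j}" for j
    unfolding B_def card_img_filter[OF inj]
    by (rule arg_cong[where f=card]) (use bd g1 in blast)
  have e2: "card {d\<in>X. 2*j+2+c \<le> d} = card {z\<in>B. j < z}" for j
    unfolding B_def card_img_filter[OF inj]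
    by (rule arg_cong[where f=card]) (use bd g2 in blast)
  have sub: "B \<subseteq> {0..h}" unfolding B_def using bd g3 by auto
  have nf: "B \<noteq> {0..h}"
  proof
    assume full: "B = {0..h}"
    have blk: "\<forall>m\<le>h. 2*m+c \<in> X \<or> 2*m+1+c \<in> X"
    proof (intro allI impI)
      fix m assume "m \<le> h"
      then have "m \<in> B" using full by simp
      then obtain d where d: "d \<in> X" "(d - c) div 2 = m" unfolding B_def g_def by auto
      have "c < d" using bd d(1) by auto
      have "d - c = 2*m \<or> d - c = 2*m+1" using div2_cases[OF d(2)] .
      then have "d = 2*m+c \<or> d = 2*m+1+c" using \<open>c < d\<close> by auto
      then show "2*m+c \<in> X \<or> 2*m+1+c \<in> X" using d(1) by auto
    qed
    have "0 \<in> B" using full by simp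
    then obtain d where d: "d \<in> X" "(d - c) div 2 = 0" unfolding B_def g_def by auto
    have "c < d" using bd d(1) by auto
    have "d - c = 2*0 \<or> d - c = 2*0+1" using div2_cases[OF d(2)] .
    then have "d = 1 + c" using \<open>c < d\<close> by auto
    then have "1 + c \<in> X" using \<open>d \<in> X\<close> by simp
    then have "2*h+1+c \<in> X" using chain[OF na blk] by simp
    then show False using bd by auto
  qed
  have "(\<Sum>j=0..h. cc (card {d\<in>X. d < 2*j+c}) j * cc (card {d\<in>X. 2*j+2+c \<le> d}) (h-j)) = SB B h"
    unfolding SB_def TB_def e1 e2 ..
  also have "\<dots> = (if B = {} then 1 else 0)" using SB_main[OF _ sub nf] fin unfolding B_def by blast
  also have "(if B = {} then 1 else (0::real)) = (if X = {} then 1 else 0)" unfolding B_def by simp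
  finally show ?thesis .
qed



lemma div_sub_even: "m \<le> (n::nat) div 2 \<Longrightarrow> (n - 2*m) div 2 = n div 2 - m" by presburger
lemma div_sub_odd: "m \<le> ((n::nat) - 1) div 2 \<Longrightarrow> (n - (2*m+1)) div 2 = (n - 1) div 2 - m" by presburger

lemma cc_prod:
  assumes "j \<le> h"
  shows "(-1::real)^(a+b) * Cnum a (j-a) * Cnum b (h-j-b) = 4^h * (cc a j * cc b (h-j))"
proof -
  have "(4::real)^h = 4^j * 4^(h-j)" using assms by (simp flip: power_add)
  then show ?thesis unfolding cc_def by (simp add: power_add field_simps)
qed

lemma cc_prod2:
  assumes "j \<le> h"
  shows "(-1::real)^(a+b+e) / 4^(j + (h-j)) * Cnum a (j-a) * Cnum b ((h-j)-b) = (-1)^e * (cc a j * cc b (h-j))"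
proof -
  have "(4::real)^(j + (h-j)) = 4^j * 4^(h-j)" by (simp add: power_add)
  then show ?thesis unfolding cc_def by (simp add: power_add field_simps)
qed

theorem proposition6p1:
  fixes n :: nat and \<alpha> :: "nat list"
  assumes "0 < n" and "is_comp n \<alpha>"
  shows "((\<Sum>j=0..n div 2. (-1::real) ^ (lp \<alpha> (2*j) + rm \<alpha> (2*j))
            * Cnum (lp \<alpha> (2*j)) (j - lp \<alpha> (2*j))
            * Cnum (rm \<alpha> (2*j)) (n div 2 - j - rm \<alpha> (2*j)))
         = (if \<alpha> = [n] then 4 ^ (n div 2) else 0)) \<and>
         ((\<Sum>i=0..n. (-1::real) ^ (lm \<alpha> i + rm \<alpha> i + i) / 4 ^ (i div 2 + (n - i) div 2)
            * Cnum (lm \<alpha> i) (i div 2 - lm \<alpha> i)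
            * Cnum (rm \<alpha> i) ((n - i) div 2 - rm \<alpha> i)) = 0)"
proof -
  note comp = assms(2)
  define D where "D = descents \<alpha>"
  define P where "P = PP \<alpha>"
  define Q where "Q = QQ \<alpha>"
  have Dsub: "D \<subseteq> {1..<n}" unfolding D_def by (rule descents_sub[OF comp])
  have PsubD: "P \<subseteq> D" and QsubD: "Q \<subseteq> D" unfolding P_def Q_def PP_def QQ_def D_def by auto
  have finP: "finite P" and finQ: "finite Q"
    using finite_subset[OF PsubD] finite_subset[OF QsubD] finite_subset[OF Dsub] by auto
  have Pb: "\<forall>d\<in>P. 1 < d \<and> d < n" using PsubD Dsub unfolding P_def PP_def by auto
  have Qb: "\<forall>d\<in>Q. 0 < d \<and> d < n" using QsubD Dsub by auto
  have naQ: "\<forall>d\<in>Q. Suc d \<notin> Q" unfolding Q_def QQ_def by auto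
  have naP: "\<forall>d\<in>P. Suc d \<notin> P" unfolding P_def PP_def by auto
  have PQ: "d \<in> P \<longleftrightarrow> d \<in> Q" if "2 \<le> d" for d
    using that unfolding P_def Q_def PP_def QQ_def by auto
  have Qe: "Q = {} \<longleftrightarrow> \<alpha> = [n]"
  proof
    assume Q0: "Q = {}"
    have "D = {}"
    proof (rule ccontr)
      assume "D \<noteq> {}"
      have finD: "finite D" using finite_subset[OF Dsub] by simp
      define d where "d = Min D"
      have "d \<in> D" unfolding d_def using finD \<open>D \<noteq> {}\<close> by simp
      moreover have "d - 1 \<notin> D"
      proof
        assume "d - 1 \<in> D"
        then have "d \<le> d - 1" unfolding d_def using finD by simp
        moreover have "1 \<le> d" using \<open>d \<in> D\<close> Dsub by auto
        ultimately show False by simp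
      qed
      ultimately have "d \<in> Q" unfolding Q_def QQ_def D_def by simp
      then show False using Q0 by simp
    qed
    then have "length \<alpha> \<le> 1" unfolding D_def descents_def
      by (metis (mono_tags, lifting) empty_Collect_eq le_refl not_le_imp_less)
    moreover have "sum_list \<alpha> = n" using comp unfolding is_comp_def by simp
    ultimately show "\<alpha> = [n]" using assms(1)
      by (cases \<alpha>) auto
  next
    assume "\<alpha> = [n]"
    then have "D = {}" unfolding D_def descents_def by auto
    then show "Q = {}" using QsubD by auto
  qed
  define h where "h = n div 2"
  have first: "(\<Sum>j=0..h. (-1::real) ^ (lp \<alpha> (2*j) + rm \<alpha> (2*j))
            * Cnum (lp \<alpha> (2*j)) (j - lp \<alpha> (2*j))
            * Cnum (rm \<alpha> (2*j)) (h - j - rm \<alpha> (2*j)))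
         = (if \<alpha> = [n] then 4 ^ h else 0)"
  proof -
    have "(\<Sum>j=0..h. (-1::real) ^ (lp \<alpha> (2*j) + rm \<alpha> (2*j))
            * Cnum (lp \<alpha> (2*j)) (j - lp \<alpha> (2*j))
            * Cnum (rm \<alpha> (2*j)) (h - j - rm \<alpha> (2*j)))
       = (\<Sum>j=0..h. 4^h * (cc (card {d\<in>Q. d < 2*j+0}) j * cc (card {d\<in>Q. 2*j+2+0 \<le> d}) (h-j)))"
    proof (rule sum.cong[OF refl])
      fix j assume j: "j \<in> {0..h}"
      have l: "lp \<alpha> (2*j) = card {d\<in>Q. d < 2*j+0}" using stats(2)[OF comp] unfolding Q_def by simp
      have "{d\<in>P. 2*j+2 \<le> d} = {d\<in>Q. 2*j+2+0 \<le> d}" using PQ by auto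
      then have r: "rm \<alpha> (2*j) = card {d\<in>Q. 2*j+2+0 \<le> d}" using stats(3)[OF comp] unfolding P_def by simp
      show "(-1::real) ^ (lp \<alpha> (2*j) + rm \<alpha> (2*j))
            * Cnum (lp \<alpha> (2*j)) (j - lp \<alpha> (2*j))
            * Cnum (rm \<alpha> (2*j)) (h - j - rm \<alpha> (2*j))
          = 4^h * (cc (card {d\<in>Q. d < 2*j+0}) j * cc (card {d\<in>Q. 2*j+2+0 \<le> d}) (h-j))"
        unfolding l r using j by (intro cc_prod) simp
    qed
    also have "\<dots> = 4^h * (\<Sum>j=0..h. cc (card {d\<in>Q. d < 2*j+0}) j * cc (card {d\<in>Q. 2*j+2+0 \<le> d}) (h-j))"
      by (simp add: sum_distrib_left)
    also have "(\<Sum>j=0..h. cc (card {d\<in>Q. d < 2*j+0}) j * cc (card {d\<in>Q. 2*j+2+0 \<le> d}) (h-j))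
        = (if Q = {} then 1 else 0)"
      by (rule block_apply[OF finQ naQ]) (use Qb in \<open>auto simp: h_def\<close>)
    finally show ?thesis using Qe by simp
  qed
  define f where "f i = (-1::real) ^ (lm \<alpha> i + rm \<alpha> i + i) / 4 ^ (i div 2 + (n - i) div 2)
            * Cnum (lm \<alpha> i) (i div 2 - lm \<alpha> i)
            * Cnum (rm \<alpha> i) ((n - i) div 2 - rm \<alpha> i)" for i
  define ho where "ho = (n - 1) div 2"
  have even: "(\<Sum>m=0..n div 2. f (2*m)) = (if P = {} then 1 else 0)"
  proof -
    have "(\<Sum>m=0..h. f (2*m)) =
      (\<Sum>m=0..h. cc (card {d\<in>P. d < 2*m+0}) m * cc (card {d\<in>P. 2*m+2+0 \<le> d}) (h-m))"
    proof (rule sum.cong[OF refl])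
      fix m assume m: "m \<in> {0..h}"
      have l: "lm \<alpha> (2*m) = card {d\<in>P. d < 2*m+0}" using stats(1)[OF comp] unfolding P_def by simp
      have r: "rm \<alpha> (2*m) = card {d\<in>P. 2*m+2+0 \<le> d}" using stats(3)[OF comp] unfolding P_def by simp
      have d1: "2*m div 2 = m" by simp
      have d2: "(n - 2*m) div 2 = h - m" unfolding h_def using m by (intro div_sub_even) (simp add: h_def)
      show "f (2*m) = cc (card {d\<in>P. d < 2*m+0}) m * cc (card {d\<in>P. 2*m+2+0 \<le> d}) (h-m)"
        unfolding f_def l r d1 d2 using cc_prod2[of m h _ _ "2*m"] m by simp
    qed
    also have "\<dots> = (if P = {} then 1 else 0)"
      by (rule block_apply[OF finP naP]) (use Pb in \<open>auto simp: h_def\<close>)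
    finally show ?thesis unfolding h_def .
  qed
  have odd: "(\<Sum>m<(n+1) div 2. f (2*m+1)) = - (if P = {} then 1 else 0)"
  proof -
    have rng: "{..<(n+1) div 2} = {0..ho}" unfolding ho_def using assms(1) by auto
    have "(\<Sum>m\<in>{0..ho}. f (2*m+1)) =
      (\<Sum>m=0..ho. - (cc (card {d\<in>P. d < 2*m+1}) m * cc (card {d\<in>P. 2*m+2+1 \<le> d}) (ho-m)))"
    proof (rule sum.cong[OF refl])
      fix m assume m: "m \<in> {0..ho}"
      have l: "lm \<alpha> (2*m+1) = card {d\<in>P. d < 2*m+1}" using stats(1)[OF comp] unfolding P_def by simp
      have "rm \<alpha> (2*m+1) = card {d\<in>P. 2*m+1+2 \<le> d}" using stats(3)[OF comp] unfolding P_def by simp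
      also have "{d\<in>P. 2*m+1+2 \<le> d} = {d\<in>P. 2*m+2+1 \<le> d}" by auto
      finally have r: "rm \<alpha> (2*m+1) = card {d\<in>P. 2*m+2+1 \<le> d}" .
      have d1: "(2*m+1) div 2 = m" by simp
      have d2: "(n - (2*m+1)) div 2 = ho - m" unfolding ho_def using m by (intro div_sub_odd) (simp add: ho_def)
      show "f (2*m+1) = - (cc (card {d\<in>P. d < 2*m+1}) m * cc (card {d\<in>P. 2*m+2+1 \<le> d}) (ho-m))"
        unfolding f_def l r d1 d2 using cc_prod2[of m ho _ _ "2*m+1"] m by simp
    qed
    also have "\<dots> = - (\<Sum>m=0..ho. cc (card {d\<in>P. d < 2*m+1}) m * cc (card {d\<in>P. 2*m+2+1 \<le> d}) (ho-m))"
      by (simp add: sum_negf)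
    also have "(\<Sum>m=0..ho. cc (card {d\<in>P. d < 2*m+1}) m * cc (card {d\<in>P. 2*m+2+1 \<le> d}) (ho-m))
        = (if P = {} then 1 else 0)"
      by (rule block_apply[OF finP naP]) (use Pb in \<open>auto simp: ho_def\<close>)
    finally show ?thesis unfolding rng .
  qed
  have second: "(\<Sum>i=0..n. f i) = 0" unfolding sum_parity[of f n] even odd by simp
  show ?thesis using first second unfolding f_def h_def by simp
qed


end
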